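(* Let $\sigma$ be a signature, $\Delta$ a set of $\mathcal{CO}[\sigma]$-formulas, and $\varphi,\psi$ arbitrary formulas over $\sigma$ (of $\mathcal{CO}_{\sqcup}[\sigma]$ or $\mathcal{COD}[\sigma]$). If $\Delta\models^g\varphi\sqcup\psi$, then $\Delta\models^g\varphi$ or $\Delta\models^g\psi$. In particular, if $\models^g\varphi\sqcup\psi$, then $\models^g\varphi$ or $\models^g\psi$.
   Context: A signature $\sigma=(\mathrm{Dom},\mathrm{Ran})$: $\mathrm{Dom}$ nonempty finite set of variables, each with nonempty finite range $\mathrm{Ran}(X)$; $\mathbf X=\mathbf x$ abbreviates $X_1=x_1\wedge\dots\wedge X_n=x_n$ ($\mathbf x\in\prod\mathrm{Ran}(X_i)$), inconsistent if it contains $X=x,X=x'$ with $x\ne x'$. Languages: $\mathcal{CO}[\sigma]$: $\alpha::=X=x\mid\neg\alpha\mid\alpha\wedge\alpha\mid\alpha\vee\alpha\mid\mathbf X=\mathbf x\;\Box\!\!\rightarrow\alpha$; $\mathcal{CO}_{\sqcup}[\sigma]$: $\varphi::=X=x\mid\neg\alpha\mid\varphi\wedge\varphi\mid\varphi\vee\varphi\mid\varphi\sqcup\varphi\mid\mathbf X=\mathbf x\;\Box\!\!\rightarrow\varphi$; $\mathcal{COD}[\sigma]$: $\varphi::=X=x\mid{=}(\mathbf X;Y)\mid\neg\alpha\mid\varphi\wedge\varphi\mid\varphi\vee\varphi\mid\mathbf X=\mathbf x\;\Box\!\!\rightarrow\varphi$ ($\alpha\in\mathcal{CO}[\sigma]$).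 Systems of functions $\mathcal F$: for each $V\in\mathrm{En}(\mathcal F)\subseteq\mathrm{Dom}$ parents $PA^{\mathcal F}_V\subseteq\mathrm{Dom}\setminus\{V\}$ and $\mathcal F_V:\mathrm{Ran}(PA^{\mathcal F}_V)\to\mathrm{Ran}(V)$; $\mathrm{Ex}(\mathcal F)=\mathrm{Dom}\setminus\mathrm{En}(\mathcal F)$; only recursive systems (acyclic parent graph), forming $\mathbb F_\sigma$. An assignment $s$ ($s(X)\in\mathrm{Ran}(X)$) is compatible with $\mathcal F$ if $s(V)=\mathcal F_V(s(PA^{\mathcal F}_V))$ for $V\in\mathrm{En}(\mathcal F)$. A generalized causal team over $\sigma$ is a set $T$ of compatible pairs $(s,\mathcal F)$ with $\mathcal F\in\mathbb F_\sigma$; $T^-=\{s:(s,\mathcal F)\in T\}$. For consistent $\mathbf X=\mathbf x$: $\mathcal F_{\mathbf X=\mathbf x}$ restricts $\mathcal F$ to $\mathrm{En}(\mathcal F)\setminus\mathbf X$; $s^{\mathcal F}_{\mathbf X=\mathbf x}$: $X_i\mapsto x_i$, $V\mapsto s(V)$ on $\mathrm{Ex}(\mathcal F)\setminus\mathbf X$, $V\mapsto\mathcal F_V(s^{\mathcal F}_{\mathbf X=\mathbf x}(PA^{\mathcal F}_V))$ on $\mathrm{En}(\mathcal F)\setminus\mathbf X$; $T_{\mathbf X=\mathbf x}=\{(s^{\mathcal F}_{\mathbf X=\mathbf x},\mathcal F_{\mathbf X=\mathbf x}):(s,\mathcal F)\in T\}$. $\models^g$: $T\models X=x$ iff $s(X)=x$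 for all $s\in T^-$; $T\models{=}(\mathbf X;Y)$ iff for all $s,s'\in T^-$, $s(\mathbf X)=s'(\mathbf X)$ implies $s(Y)=s'(Y)$; $T\models\neg\alpha$ iff $\{(s,\mathcal F)\}\not\models\alpha$ for all $(s,\mathcal F)\in T$; $\wedge$ classical; $T\models\varphi\vee\psi$ iff $T=T_1\cup T_2$ with $T_1\models\varphi$, $T_2\models\psi$; $T\models\varphi\sqcup\psi$ iff $T\models\varphi$ or $T\models\psi$; $T\models\mathbf X=\mathbf x\;\Box\!\!\rightarrow\varphi$ iff $\mathbf X=\mathbf x$ inconsistent or $T_{\mathbf X=\mathbf x}\models\varphi$. $\Delta\models^g\varphi$: every generalized causal team over $\sigma$ satisfying all of $\Delta$ satisfies $\varphi$. *)

theory Defs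
  imports "HOL-Library.FuncSet"
begin

text \<open>A signature is given by a set Dom of variables and a range function Ran.
  Values of all variables live in one HOL type 'a; Ran X is the range of X.\<close>

definition signature :: "'v set \<Rightarrow> ('v \<Rightarrow> 'a set) \<Rightarrow> bool" where
  "signature Dom Ran \<longleftrightarrow> finite Dom \<and> Dom \<noteq> {} \<and>
     (\<forall>X\<in>Dom. finite (Ran X) \<and> Ran X \<noteq> {})"

definition assignment :: "'v set \<Rightarrow> ('v \<Rightarrow> 'a set) \<Rightarrow> ('v \<Rightarrow> 'a) \<Rightarrow> bool" where
  "assignment Dom Ran s \<longleftrightarrow> s \<in> (\<Pi>\<^sub>E X\<in>Dom. Ran X)"

text \<open>One syntax tree containing all constructors; the languages CO, CO_sqcup, COD
  are carved out by predicates.  An antecedent X = x is a list of (variable, value) pairs.\<close>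

datatype ('v, 'a) form =
    Eq 'v 'a
  | Dep "'v list" 'v
  | Neg "('v, 'a) form"
  | Conj "('v, 'a) form" "('v, 'a) form"
  | Disj "('v, 'a) form" "('v, 'a) form"
  | Tor "('v, 'a) form" "('v, 'a) form"
  | Cf "('v \<times> 'a) list" "('v, 'a) form"

fun isCO :: "('v, 'a) form \<Rightarrow> bool" where
  "isCO (Eq X x) = True"
| "isCO (Dep Xs Y) = False"
| "isCO (Neg a) = isCO a"
| "isCO (Conj a b) = (isCO a \<and> isCO b)"
| "isCO (Disj a b) = (isCO a \<and> isCO b)"
| "isCO (Tor a b) = False"
| "isCO (Cf xs a) = isCO a"

fun isCOsq :: "('v, 'a) form \<Rightarrow> bool" where
  "isCOsq (Eq X x) = True"
| "isCOsq (Dep Xs Y) = False"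
| "isCOsq (Neg a) = isCO a"
| "isCOsq (Conj a b) = (isCOsq a \<and> isCOsq b)"
| "isCOsq (Disj a b) = (isCOsq a \<and> isCOsq b)"
| "isCOsq (Tor a b) = (isCOsq a \<and> isCOsq b)"
| "isCOsq (Cf xs a) = isCOsq a"

fun isCOD :: "('v, 'a) form \<Rightarrow> bool" where
  "isCOD (Eq X x) = True"
| "isCOD (Dep Xs Y) = True"
| "isCOD (Neg a) = isCO a"
| "isCOD (Conj a b) = (isCOD a \<and> isCOD b)"
| "isCOD (Disj a b) = (isCOD a \<and> isCOD b)"
| "isCOD (Tor a b) = False"
| "isCOD (Cf xs a) = isCOD a"

fun wf_form :: "'v set \<Rightarrow> ('v \<Rightarrow> 'a set) \<Rightarrow> ('v, 'a) form \<Rightarrow> bool" where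
  "wf_form Dom Ran (Eq X x) = (X \<in> Dom \<and> x \<in> Ran X)"
| "wf_form Dom Ran (Dep Xs Y) = (set Xs \<subseteq> Dom \<and> Y \<in> Dom)"
| "wf_form Dom Ran (Neg a) = wf_form Dom Ran a"
| "wf_form Dom Ran (Conj a b) = (wf_form Dom Ran a \<and> wf_form Dom Ran b)"
| "wf_form Dom Ran (Disj a b) = (wf_form Dom Ran a \<and> wf_form Dom Ran b)"
| "wf_form Dom Ran (Tor a b) = (wf_form Dom Ran a \<and> wf_form Dom Ran b)"
| "wf_form Dom Ran (Cf xs a) = ((\<forall>(X, x)\<in>set xs. X \<in> Dom \<and> x \<in> Ran X) \<and> wf_form Dom Ran a)"

definition consistent :: "('v \<times> 'a) list \<Rightarrow> bool" where
  "consistent xs \<longleftrightarrow> (\<forall>X x x'. (X, x) \<in> set xs \<longrightarrow> (X, x') \<in> set xs \<longrightarrow> x = x')"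

record ('v, 'a) sysf =
  en :: "'v set"
  pa :: "'v \<Rightarrow> 'v set"
  fn :: "'v \<Rightarrow> ('v \<Rightarrow> 'a) \<Rightarrow> 'a"

definition sysf_wf :: "'v set \<Rightarrow> ('v \<Rightarrow> 'a set) \<Rightarrow> ('v, 'a) sysf \<Rightarrow> bool" where
  "sysf_wf Dom Ran F \<longleftrightarrow> en F \<subseteq> Dom \<and>
     (\<forall>V\<in>en F. pa F V \<subseteq> Dom - {V} \<and>
        fn F V \<in> (\<Pi>\<^sub>E t\<in>(\<Pi>\<^sub>E W\<in>pa F V. Ran W). Ran V)) \<and>
     (\<forall>V. V \<notin> en F \<longrightarrow> pa F V = {} \<and> fn F V = (\<lambda>_. undefined))"

definition recursive :: "('v, 'a) sysf \<Rightarrow> bool" where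
  "recursive F \<longleftrightarrow> acyclic {(W, V). V \<in> en F \<and> W \<in> pa F V}"

definition Fsig :: "'v set \<Rightarrow> ('v \<Rightarrow> 'a set) \<Rightarrow> ('v, 'a) sysf set" where
  "Fsig Dom Ran = {F. sysf_wf Dom Ran F \<and> recursive F}"

definition compatible :: "('v \<Rightarrow> 'a) \<Rightarrow> ('v, 'a) sysf \<Rightarrow> bool" where
  "compatible s F \<longleftrightarrow> (\<forall>V\<in>en F. s V = fn F V (restrict s (pa F V)))"

definition gcteam :: "'v set \<Rightarrow> ('v \<Rightarrow> 'a set) \<Rightarrow> (('v \<Rightarrow> 'a) \<times> ('v, 'a) sysf) set \<Rightarrow> bool" where
  "gcteam Dom Ran T \<longleftrightarrow>
     (\<forall>(s, F)\<in>T. assignment Dom Ran s \<and> F \<in> Fsig Dom Ran \<and> compatible s F)"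

definition interv_sys :: "('v \<times> 'a) list \<Rightarrow> ('v, 'a) sysf \<Rightarrow> ('v, 'a) sysf" where
  "interv_sys xs F =
     (let E = en F - fst ` set xs in
      \<lparr>en = E, pa = (\<lambda>V. if V \<in> E then pa F V else {}),
       fn = (\<lambda>V. if V \<in> E then fn F V else (\<lambda>_. undefined))\<rparr>)"

text \<open>The intervened assignment, characterized by its (recursive) defining equations;
  for recursive F and consistent xs over Dom it is uniquely determined.\<close>

definition interv_asg :: "'v set \<Rightarrow> ('v \<times> 'a) list \<Rightarrow> ('v, 'a) sysf \<Rightarrow> ('v \<Rightarrow> 'a) \<Rightarrow> ('v \<Rightarrow> 'a)" where
  "interv_asg Dom xs F s = (THE s'.
      (\<forall>(X, x)\<in>set xs. s' X = x) \<and>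
      (\<forall>V\<in>Dom - en F - fst ` set xs. s' V = s V) \<and>
      (\<forall>V\<in>en F - fst ` set xs. s' V = fn F V (restrict s' (pa F V))) \<and>
      (\<forall>V. V \<notin> Dom \<longrightarrow> s' V = undefined))"

definition interv_team :: "'v set \<Rightarrow> ('v \<times> 'a) list \<Rightarrow> (('v \<Rightarrow> 'a) \<times> ('v, 'a) sysf) set
    \<Rightarrow> (('v \<Rightarrow> 'a) \<times> ('v, 'a) sysf) set" where
  "interv_team Dom xs T = (\<lambda>(s, F). (interv_asg Dom xs F s, interv_sys xs F)) ` T"

fun sat :: "'v set \<Rightarrow> (('v \<Rightarrow> 'a) \<times> ('v, 'a) sysf) set \<Rightarrow> ('v, 'a) form \<Rightarrow> bool" where
  "sat Dom T (Eq X x) = (\<forall>(s, F)\<in>T. s X = x)"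
| "sat Dom T (Dep Xs Y) = (\<forall>(s, F)\<in>T. \<forall>(s', F')\<in>T.
       (\<forall>X\<in>set Xs. s X = s' X) \<longrightarrow> s Y = s' Y)"
| "sat Dom T (Neg a) = (\<forall>p\<in>T. \<not> sat Dom {p} a)"
| "sat Dom T (Conj a b) = (sat Dom T a \<and> sat Dom T b)"
| "sat Dom T (Disj a b) = (\<exists>T1 T2. T = T1 \<union> T2 \<and> sat Dom T1 a \<and> sat Dom T2 b)"
| "sat Dom T (Tor a b) = (sat Dom T a \<or> sat Dom T b)"
| "sat Dom T (Cf xs a) = (\<not> consistent xs \<or> sat Dom (interv_team Dom xs T) a)"

definition gentails :: "'v set \<Rightarrow> ('v \<Rightarrow> 'a set) \<Rightarrow> ('v, 'a) form set \<Rightarrow> ('v, 'a) form \<Rightarrow> bool" where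
  "gentails Dom Ran \<Delta> \<phi> \<longleftrightarrow>
     (\<forall>T. gcteam Dom Ran T \<longrightarrow> (\<forall>\<delta>\<in>\<Delta>. sat Dom T \<delta>) \<longrightarrow> sat Dom T \<phi>)"

end

theory Submission
  imports Defs
begin

lemma sat_down:
  "S \<subseteq> T \<Longrightarrow> sat Dom T a \<Longrightarrow> sat Dom S a"
proof (induction a arbitrary: S T)
  case (Disj a b)
  then obtain T1 T2 where "T = T1 \<union> T2" "sat Dom T1 a" "sat Dom T2 b" by auto
  moreover have "S = (S \<inter> T1) \<union> (S \<inter> T2)" using Disj.prems(1) \<open>T = T1 \<union> T2\<close> by blast
  ultimately show ?case using Disj.IH[of "S \<inter> T1" T1] Disj.IH[of "S \<inter> T2" T2]
    by (metis inf_le2 sat.simps(5))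
next
  case (Cf xs a)
  have "interv_team Dom xs S \<subseteq> interv_team Dom xs T"
    using Cf.prems(1) unfolding interv_team_def by (rule image_mono)
  then show ?case using Cf by auto
next
  case (Dep xs y) then show ?case by (simp, blast)
next
  case (Neg a) then show ?case by (simp, blast)
next
  case (Conj a b) then show ?case by simp
next
  case (Tor a b) then show ?case by (simp, blast)
qed (simp, blast)

lemma singleton_union:
  "{p} = A \<union> B \<Longrightarrow> A = {p} \<or> B = {p}"
proof -
  assume h: "{p} = A \<union> B"
  have "p \<in> A \<or> p \<in> B" using h by blast
  moreover have "A \<subseteq> {p}" "B \<subseteq> {p}" using h by blast+
  ultimately show ?thesis by blast
qed

lemma interv_team_single:
  "interv_team Dom xs {p} = {(interv_asg Dom xs (snd p) (fst p), interv_sys xs (snd p))}"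
  unfolding interv_team_def by (cases p) auto

lemma sat_flat:
  "isCO a \<Longrightarrow> sat Dom T a \<longleftrightarrow> (\<forall>p\<in>T. sat Dom {p} a)"
proof (induction a arbitrary: T)
  case (Disj a b)
  show ?case
  proof
    assume "sat Dom T (Disj a b)"
    then obtain T1 T2 where "T = T1 \<union> T2" "sat Dom T1 a" "sat Dom T2 b"
      unfolding sat.simps(5) by blast
    note T = this
    show "\<forall>p\<in>T. sat Dom {p} (Disj a b)"
    proof
      fix p assume "p \<in> T"
      have e1: "sat Dom {} a" using sat_down[of "{}" T1 Dom a] T(2) by blast
      have e2: "sat Dom {} b" using sat_down[of "{}" T2 Dom b] T(3) by blast
      show "sat Dom {p} (Disj a b)"
      proof (cases "p \<in> T1")
        case True
        then have "sat Dom {p} a" using Disj.IH(1)[of T1] Disj.prems T(2) by simp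
        then show ?thesis using e2 by (metis sat.simps(5) sup_bot.right_neutral)
      next
        case False
        then have "p \<in> T2" using T(1) \<open>p \<in> T\<close> by blast
        then have "sat Dom {p} b" using Disj.IH(2)[of T2] Disj.prems T(3) by simp
        then show ?thesis using e1 by (metis sat.simps(5) sup_bot_left)
      qed
    qed
  next
    assume H: "\<forall>p\<in>T. sat Dom {p} (Disj a b)"
    define T1 where "T1 = {p\<in>T. sat Dom {p} a}"
    define T2 where "T2 = {p\<in>T. sat Dom {p} b}"
    have "T = T1 \<union> T2"
    proof
      show "T \<subseteq> T1 \<union> T2"
      proof
        fix p assume "p \<in> T"
        then have "sat Dom {p} (Disj a b)" using H by blast
        then obtain A B where AB: "{p} = A \<union> B" "sat Dom A a" "sat Dom B b"
          unfolding sat.simps(5) by blast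
        then have "sat Dom {p} a \<or> sat Dom {p} b" using singleton_union[of p A B] by metis
        then show "p \<in> T1 \<union> T2" using \<open>p \<in> T\<close>
          unfolding T1_def T2_def by blast
      qed
    qed (unfold T1_def T2_def, blast)
    moreover have "sat Dom T1 a" using Disj.IH(1)[of T1] Disj.prems unfolding T1_def by simp
    moreover have "sat Dom T2 b" using Disj.IH(2)[of T2] Disj.prems unfolding T2_def by simp
    ultimately show "sat Dom T (Disj a b)" unfolding sat.simps(5) by blast
  qed
next
  case (Cf xs a)
  have "sat Dom (interv_team Dom xs T) a \<longleftrightarrow>
        (\<forall>q\<in>interv_team Dom xs T. sat Dom {q} a)" using Cf.prems by (intro Cf.IH) simp
  also have "\<dots> \<longleftrightarrow> (\<forall>p\<in>T. sat Dom (interv_team Dom xs {p}) a)"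
    unfolding interv_team_single unfolding interv_team_def by auto
  finally show ?case by (simp only: sat.simps) blast
next
  case (Neg a) show ?case by simp
next
  case (Conj a b)
  have "isCO a" "isCO b" using Conj.prems by simp_all
  then have "sat Dom T a \<longleftrightarrow> (\<forall>p\<in>T. sat Dom {p} a)" "sat Dom T b \<longleftrightarrow> (\<forall>p\<in>T. sat Dom {p} b)"
    using Conj.IH by blast+
  then show ?case by (simp only: sat.simps) blast
next
  case (Eq X x) show ?case by auto
next
  case (Dep X x) then show ?case by simp
next
  case (Tor X x) then show ?case by simp
qed

theorem theorem3p8:
  fixes Dom :: "'v set" and Ran :: "'v \<Rightarrow> 'a set"
    and \<Delta> :: "('v, 'a) form set" and \<phi> \<psi> :: "('v, 'a) form"
  assumes "signature Dom Ran"
    and "\<forall>\<delta>\<in>\<Delta>. isCO \<delta> \<and> wf_form Dom Ran \<delta>"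
    and "(isCOsq \<phi> \<or> isCOD \<phi>) \<and> wf_form Dom Ran \<phi>"
    and "(isCOsq \<psi> \<or> isCOD \<psi>) \<and> wf_form Dom Ran \<psi>"
    and "gentails Dom Ran \<Delta> (Tor \<phi> \<psi>)"
  shows "gentails Dom Ran \<Delta> \<phi> \<or> gentails Dom Ran \<Delta> \<psi>"
proof (rule ccontr)
  assume "\<not> ?thesis"
  then obtain T1 T2 where T1: "gcteam Dom Ran T1" "\<forall>\<delta>\<in>\<Delta>. sat Dom T1 \<delta>" "\<not> sat Dom T1 \<phi>"
    and T2: "gcteam Dom Ran T2" "\<forall>\<delta>\<in>\<Delta>. sat Dom T2 \<delta>" "\<not> sat Dom T2 \<psi>"
    unfolding gentails_def by blast
  have g: "gcteam Dom Ran (T1 \<union> T2)" using T1(1) T2(1) unfolding gcteam_def by blast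
  have d: "\<forall>\<delta>\<in>\<Delta>. sat Dom (T1 \<union> T2) \<delta>"
  proof
    fix \<delta> assume "\<delta> \<in> \<Delta>"
    then have "isCO \<delta>" using assms(2) by auto
    then show "sat Dom (T1 \<union> T2) \<delta>"
      using sat_flat[of \<delta> Dom] T1(2) T2(2) \<open>\<delta> \<in> \<Delta>\<close> by blast
  qed
  have "sat Dom (T1 \<union> T2) \<phi> \<or> sat Dom (T1 \<union> T2) \<psi>"
    using assms(5) g d unfolding gentails_def by auto
  then show False using sat_down[of T1 "T1 \<union> T2" Dom \<phi>] sat_down[of T2 "T1 \<union> T2" Dom \<psi>] T1(3) T2(3)
    by blast
qed

end
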